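(* Let $q_1,q_2\in[1,\infty]$ and $\alpha_1,\alpha_2\ge0$ satisfy $1=\frac1{q_1}+\frac1{q_2}$, and set $\alpha=\frac{\alpha_1}{q_1}+\frac{\alpha_2}{q_2}$ (with $1/\infty=0$). Then $$\|f_1f_2\|_{\mathfrak L^{1,\infty}(\log\mathfrak L)^\alpha}\le\|f_1\|_{\mathfrak L^{q_1,\infty}(\log\mathfrak L)^{\alpha_1}}\|f_2\|_{\mathfrak L^{q_2,\infty}(\log\mathfrak L)^{\alpha_2}}$$ for all $f_1\in\mathfrak L^{q_1,\infty}(\log\mathfrak L)^{\alpha_1}$, $f_2\in\mathfrak L^{q_2,\infty}(\log\mathfrak L)^{\alpha_2}$. Furthermore, $$|||\tilde f_1\tilde f_2|||_{1,\alpha;\rho}\le|||\tilde f_1|||_{q_1,\alpha_1;\rho}\,|||\tilde f_2|||_{q_2,\alpha_2;\rho}$$ for all $\tilde f_1\in\mathfrak L^{q_1,\infty}_{\rm ul}(\log\mathfrak L)^{\alpha_1}$, $\tilde f_2\in\mathfrak L^{q_2,\infty}_{\rm ul}(\log\mathfrak L)^{\alpha_2}$ and $\rho>0$.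
   Context: For $q\in[1,\infty)$, $\alpha\ge0$ and $f\in L^1_{\rm loc}(\mathbb R^n)$, $\|f\|_{\mathfrak L^{q,\infty}(\log\mathfrak L)^\alpha}:=\sup_{s>0}\{[\log(e+1/s)]^\alpha\sup_{|E|=s}\int_E|f|^q\,dx\}^{1/q}$ (inner sup over measurable $E$ with $|E|=s$); for $q=\infty$ it is $\|f\|_{L^\infty}$. $\mathfrak L^{q,\infty}(\log\mathfrak L)^\alpha$ is the set of $f\in L^1_{\rm loc}$ with finite norm. For $\rho>0$, $|||f|||_{q,\alpha;\rho}:=\sup_{z\in\mathbb R^n}\|f\chi_{B(z,\rho)}\|_{\mathfrak L^{q,\infty}(\log\mathfrak L)^\alpha}$; $\mathfrak L^{q,\infty}_{\rm ul}(\log\mathfrak L)^\alpha$ is the set of $f\in L^1_{\rm loc}$ with $|||f|||_{q,\alpha;1}<\infty$. *)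

theory Defs
  imports "HOL-Analysis.Analysis" "HOL-Probability.Essential_Supremum"
begin

text \<open>Exponents q in [1,\<infinity>] are represented as extended nonnegative reals;
  the reciprocal 1/q is taken in ennreal, so 1/\<infinity> = 0.\<close>
definition inv_exp :: "ennreal \<Rightarrow> real" where
  "inv_exp q = enn2real (1 / q)"

text \<open>Real power on [0,\<infinity>] with \<infinity>^p = \<infinity> (used only for p > 0).\<close>
definition epow :: "ennreal \<Rightarrow> real \<Rightarrow> ennreal" where
  "epow x p = (if x = \<infinity> then \<infinity> else ennreal (enn2real x powr p))"

definition loc_integrable :: "('a::euclidean_space \<Rightarrow> real) \<Rightarrow> bool" where
  "loc_integrable f \<longleftrightarrow> (\<forall>K. compact K \<longrightarrow> set_integrable lebesgue K f)"

definition LlogL_norm :: "ennreal \<Rightarrow> real \<Rightarrow> ('a::euclidean_space \<Rightarrow> real) \<Rightarrow> ennreal" where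
  "LlogL_norm q \<alpha> f =
    (if q = \<infinity> then esssup lebesgue (\<lambda>x. ennreal \<bar>f x\<bar>)
     else epow
       (SUP s\<in>{0<..}. ennreal (ln (exp 1 + 1 / s) powr \<alpha>) *
          (SUP E\<in>{E \<in> sets lebesgue. emeasure lebesgue E = ennreal s}.
              (\<integral>\<^sup>+ x\<in>E. ennreal (\<bar>f x\<bar> powr enn2real q) \<partial>lebesgue)))
       (1 / enn2real q))"

definition LlogL_space :: "ennreal \<Rightarrow> real \<Rightarrow> ('a::euclidean_space \<Rightarrow> real) set" where
  "LlogL_space q \<alpha> = {f. loc_integrable f \<and> LlogL_norm q \<alpha> f < \<infinity>}"

definition ul_norm :: "ennreal \<Rightarrow> real \<Rightarrow> real \<Rightarrow> ('a::euclidean_space \<Rightarrow> real) \<Rightarrow> ennreal" where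
  "ul_norm q \<alpha> \<rho> f = (SUP z. LlogL_norm q \<alpha> (\<lambda>x. indicator (ball z \<rho>) x * f x))"

definition ul_space :: "ennreal \<Rightarrow> real \<Rightarrow> ('a::euclidean_space \<Rightarrow> real) set" where
  "ul_space q \<alpha> = {f. loc_integrable f \<and> ul_norm q \<alpha> 1 f < \<infinity>}"

end

theory Submission
  imports Defs
begin

lemma epow_mono: "x \<le> y \<Longrightarrow> 0 < r \<Longrightarrow> epow x r \<le> epow y r"
proof (cases "y = \<infinity>")
  case False
  assume xy: "x \<le> y" and r: "0 < r"
  then have "x \<noteq> \<infinity>" using False by (metis infinity_ennreal_def neq_top_trans)
  moreover have "enn2real x \<le> enn2real y" using enn2real_mono[OF xy] False
    by (simp add: top.not_eq_extremum)
  ultimately show ?thesis using False r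
    by (auto simp: epow_def intro!: ennreal_leI powr_mono2)
qed (simp add: epow_def)

lemma epow_one: "epow x 1 = x"
  by (cases x) (auto simp: epow_def)

lemma epow_cmult:
  assumes "0 < c" "0 < r"
  shows "ennreal (c powr r) * epow A r = epow (ennreal c * A) r"
proof (cases "A = \<infinity>")
  case True
  then show ?thesis using assms by (simp add: epow_def ennreal_mult_top)
next
  case False
  then obtain a where a: "A = ennreal a" "0 \<le> a" by (cases A) auto
  have "ennreal c * A = ennreal (c * a)" using a assms by (simp add: ennreal_mult)
  then show ?thesis using a assms
    by (simp add: epow_def powr_mult ennreal_mult[symmetric])
qed

lemma loc_int_meas:
  fixes f :: "'a::euclidean_space \<Rightarrow> real"
  assumes "loc_integrable f"
  shows "f \<in> borel_measurable lebesgue"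
proof (rule borel_measurable_LIMSEQ_real)
  fix n :: nat
  have "set_integrable lebesgue (cball 0 (real n)) f"
    using assms by (simp add: loc_integrable_def)
  then show "(\<lambda>x. indicator (cball 0 (real n)) x *\<^sub>R f x) \<in> borel_measurable lebesgue"
    unfolding set_integrable_def by (rule borel_measurable_integrable)
next
  fix x :: 'a
  have "eventually (\<lambda>n. indicator (cball 0 (real n)) x *\<^sub>R f x = f x) sequentially"
  proof (rule eventually_sequentiallyI[of "nat \<lceil>norm x\<rceil>"])
    fix n assume "nat \<lceil>norm x\<rceil> \<le> n"
    then have "norm x \<le> real n" by linarith
    then show "indicator (cball 0 (real n)) x *\<^sub>R f x = f x" by (simp add: indicator_def)
  qed
  then show "(\<lambda>n. indicator (cball 0 (real n)) x *\<^sub>R f x) \<longlonglongrightarrow> f x"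
    by (rule tendsto_eventually)
qed


lemma holder_nn:
  fixes f g :: "'b \<Rightarrow> real"
  assumes p: "p > 1" and q: "q > 1" and pq: "1/p + 1/q = 1"
    and fm: "f \<in> borel_measurable M" and gm: "g \<in> borel_measurable M"
    and f0: "\<And>x. f x \<ge> 0" and g0: "\<And>x. g x \<ge> 0"
  shows "(\<integral>\<^sup>+x. ennreal (f x * g x) \<partial>M)
    \<le> epow (\<integral>\<^sup>+x. ennreal (f x powr p) \<partial>M) (1/p) * epow (\<integral>\<^sup>+x. ennreal (g x powr q) \<partial>M) (1/q)"
proof -
  define A where "A = (\<integral>\<^sup>+x. ennreal (f x powr p) \<partial>M)"
  define B where "B = (\<integral>\<^sup>+x. ennreal (g x powr q) \<partial>M)"
  have Am: "(\<lambda>x. ennreal (f x powr p)) \<in> borel_measurable M" using fm by measurable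
  have Bm: "(\<lambda>x. ennreal (g x powr q)) \<in> borel_measurable M" using gm by measurable
  have epos: "epow X r \<noteq> 0" if "X \<noteq> 0" "r > 0" for X r
    using that by (cases X) (auto simp: epow_def)
  show ?thesis
  proof (cases "A = 0 \<or> B = 0")
    case True
    then show ?thesis
    proof
      assume "A = 0"
      then have "AE x in M. ennreal (f x powr p) = 0" using nn_integral_0_iff_AE[OF Am] A_def by simp
      then have "AE x in M. ennreal (f x * g x) = 0"
        by eventually_elim (use f0 g0 in auto)
      then have "(\<integral>\<^sup>+x. ennreal (f x * g x) \<partial>M) = (\<integral>\<^sup>+x. 0 \<partial>M)"
        by (rule nn_integral_cong_AE)
      then show ?thesis by simp
    next
      assume "B = 0"
      then have "AE x in M. ennreal (g x powr q) = 0" using nn_integral_0_iff_AE[OF Bm] B_def by simp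
      then have "AE x in M. ennreal (f x * g x) = 0"
        by eventually_elim (use f0 g0 in auto)
      then have "(\<integral>\<^sup>+x. ennreal (f x * g x) \<partial>M) = (\<integral>\<^sup>+x. 0 \<partial>M)"
        by (rule nn_integral_cong_AE)
      then show ?thesis by simp
    qed
  next
    case False
    then have A0: "A \<noteq> 0" and B0: "B \<noteq> 0" by auto
    show ?thesis
    proof (cases "A = \<infinity> \<or> B = \<infinity>")
      case True
      have e1: "epow A (1/p) \<noteq> 0" "epow B (1/q) \<noteq> 0"
        using epos[OF A0, of "1/p"] epos[OF B0, of "1/q"] p q by auto
      have "epow A (1/p) = \<infinity> \<or> epow B (1/q) = \<infinity>" using True by (auto simp: epow_def)
      then have "epow A (1/p) * epow B (1/q) = \<infinity>"
        using e1 by (metis ennreal_mult_top ennreal_top_mult infinity_ennreal_def)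
      then show ?thesis by (simp add: A_def B_def)
    next
      case False
      then obtain a b where ab: "A = ennreal a" "B = ennreal b" "0 \<le> a" "0 \<le> b"
        by (metis ennreal_cases infinity_ennreal_def)
      then have a0: "a > 0" and b0: "b > 0" using A0 B0 by auto
      define \<alpha> where "\<alpha> = a powr (1/p)"
      define \<beta> where "\<beta> = b powr (1/q)"
      have al: "\<alpha> > 0" "\<beta> > 0" using a0 b0 by (auto simp: \<alpha>_def \<beta>_def)
      have alp: "\<alpha> powr p = a" using a0 p by (simp add: \<alpha>_def powr_powr)
      have bep: "\<beta> powr q = b" using b0 q by (simp add: \<beta>_def powr_powr)
      define c1 where "c1 = \<alpha> * \<beta> / (a * p)"
      define c2 where "c2 = \<alpha> * \<beta> / (b * q)"
      have c: "c1 \<ge> 0" "c2 \<ge> 0" using al a0 b0 p q by (auto simp: c1_def c2_def)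
      have pw: "f x * g x \<le> c1 * f x powr p + c2 * g x powr q" for x
      proof -
        have "(f x / \<alpha>) * (g x / \<beta>) \<le> (f x / \<alpha>) powr p / p + (g x / \<beta>) powr q / q"
          using Youngs_inequality[OF p q pq, of "f x / \<alpha>" "g x / \<beta>"] f0[of x] g0[of x] al by simp
        also have "\<dots> = f x powr p / (a * p) + g x powr q / (b * q)"
          using f0[of x] g0[of x] al by (simp add: powr_divide alp bep)
        finally have "(f x * g x) / (\<alpha> * \<beta>) \<le> f x powr p / (a * p) + g x powr q / (b * q)"
          by simp
        then have "f x * g x \<le> (f x powr p / (a * p) + g x powr q / (b * q)) * (\<alpha> * \<beta>)"
          using al by (simp add: pos_divide_le_eq)
        then show ?thesis by (simp add: c1_def c2_def algebra_simps)
      qed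
      have "(\<integral>\<^sup>+x. ennreal (f x * g x) \<partial>M)
          \<le> (\<integral>\<^sup>+x. ennreal c1 * ennreal (f x powr p) + ennreal c2 * ennreal (g x powr q) \<partial>M)"
      proof (intro nn_integral_mono)
        fix x
        have "ennreal (f x * g x) \<le> ennreal (c1 * f x powr p + c2 * g x powr q)"
          by (rule ennreal_leI[OF pw])
        also have "\<dots> = ennreal (c1 * f x powr p) + ennreal (c2 * g x powr q)"
          using c by (intro ennreal_plus) auto
        also have "\<dots> = ennreal c1 * ennreal (f x powr p) + ennreal c2 * ennreal (g x powr q)"
          using c by (simp add: ennreal_mult)
        finally show "ennreal (f x * g x) \<le> ennreal c1 * ennreal (f x powr p) + ennreal c2 * ennreal (g x powr q)" .
      qed
      also have "\<dots> = ennreal c1 * A + ennreal c2 * B"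
        using Am Bm by (simp add: nn_integral_add nn_integral_cmult A_def B_def)
      also have "\<dots> = ennreal (c1 * a + c2 * b)"
        using ab c by (simp add: ennreal_mult ennreal_plus)
      also have "c1 * a + c2 * b = \<alpha> * \<beta>"
      proof -
        have "c1 * a + c2 * b = \<alpha> * \<beta> * (1/p + 1/q)"
          using a0 b0 p q by (simp add: c1_def c2_def field_simps)
        then show ?thesis using pq by simp
      qed
      also have "ennreal (\<alpha> * \<beta>) = epow A (1/p) * epow B (1/q)"
        using ab al by (simp add: epow_def \<alpha>_def \<beta>_def ennreal_mult)
      finally show ?thesis by (simp add: A_def B_def)
    qed
  qed
qed


lemma L_ge1: "0 < s \<Longrightarrow> 1 \<le> ln (exp 1 + 1 / (s::real))"
proof -
  assume "0 < s"
  then have "exp 1 \<le> exp 1 + 1 / s" by simp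
  moreover have "0 < exp 1 + 1 / s" using \<open>0 < s\<close> by (simp add: add_pos_pos)
  ultimately have "ln (exp 1) \<le> ln (exp 1 + 1 / s)" by (subst ln_le_cancel_iff) auto
  then show ?thesis by simp
qed

lemma core_fin:
  fixes f1 f2 :: "'a::euclidean_space \<Rightarrow> real"
  assumes p: "p > 1" and q: "q > 1" and pq: "1/p + 1/q = 1"
    and a1: "0 \<le> \<alpha>1" and a2: "0 \<le> \<alpha>2"
    and m1[measurable]: "f1 \<in> borel_measurable lebesgue"
    and m2[measurable]: "f2 \<in> borel_measurable lebesgue"
  shows "LlogL_norm 1 (\<alpha>1 / p + \<alpha>2 / q) (\<lambda>x. f1 x * f2 x)
     \<le> LlogL_norm (ennreal p) \<alpha>1 f1 * LlogL_norm (ennreal q) \<alpha>2 f2"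
proof -
  define S1 where "S1 = (SUP s\<in>{0<..}. ennreal (ln (exp 1 + 1 / s) powr \<alpha>1) *
          (SUP E\<in>{E \<in> sets lebesgue. emeasure lebesgue E = ennreal s}.
              (\<integral>\<^sup>+ x\<in>E. ennreal (\<bar>f1 x\<bar> powr p) \<partial>lebesgue)))"
  define S2 where "S2 = (SUP s\<in>{0<..}. ennreal (ln (exp 1 + 1 / s) powr \<alpha>2) *
          (SUP E\<in>{E \<in> sets lebesgue. emeasure lebesgue E = ennreal s}.
              (\<integral>\<^sup>+ x\<in>E. ennreal (\<bar>f2 x\<bar> powr q) \<partial>lebesgue)))"
  have N1: "LlogL_norm (ennreal p) \<alpha>1 f1 = epow S1 (1/p)"
    using p by (simp add: LlogL_norm_def S1_def)
  have N2: "LlogL_norm (ennreal q) \<alpha>2 f2 = epow S2 (1/q)"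
    using q by (simp add: LlogL_norm_def S2_def)
  have "LlogL_norm 1 (\<alpha>1 / p + \<alpha>2 / q) (\<lambda>x. f1 x * f2 x) =
     (SUP s\<in>{0<..}. ennreal (ln (exp 1 + 1 / s) powr (\<alpha>1 / p + \<alpha>2 / q)) *
          (SUP E\<in>{E \<in> sets lebesgue. emeasure lebesgue E = ennreal s}.
              (\<integral>\<^sup>+ x\<in>E. ennreal (\<bar>f1 x * f2 x\<bar>) \<partial>lebesgue)))"
    by (simp add: LlogL_norm_def epow_one)
  also have "\<dots> \<le> epow S1 (1/p) * epow S2 (1/q)"
  proof (intro SUP_least)
    fix s :: real assume s: "s \<in> {0<..}"
    define L where "L = ln (exp 1 + 1 / s)"
    have L1: "1 \<le> L" using s L_ge1 by (simp add: L_def)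
    show "ennreal (ln (exp 1 + 1 / s) powr (\<alpha>1 / p + \<alpha>2 / q)) *
          (SUP E\<in>{E \<in> sets lebesgue. emeasure lebesgue E = ennreal s}.
              (\<integral>\<^sup>+ x\<in>E. ennreal (\<bar>f1 x * f2 x\<bar>) \<partial>lebesgue)) \<le> epow S1 (1/p) * epow S2 (1/q)"
      unfolding SUP_mult_left_ennreal
    proof (intro SUP_least)
      fix E :: "'a set" assume E: "E \<in> {E \<in> sets lebesgue. emeasure lebesgue E = ennreal s}"
      then have Em[measurable]: "E \<in> sets lebesgue" by simp
      define A where "A = (\<integral>\<^sup>+ x\<in>E. ennreal (\<bar>f1 x\<bar> powr p) \<partial>lebesgue)"
      define B where "B = (\<integral>\<^sup>+ x\<in>E. ennreal (\<bar>f2 x\<bar> powr q) \<partial>lebesgue)"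
      have eq1: "(\<lambda>x. ennreal (\<bar>f1 x\<bar> * indicator E x * (\<bar>f2 x\<bar> * indicator E x)))
          = (\<lambda>x. ennreal \<bar>f1 x * f2 x\<bar> * indicator E x)"
        by (auto simp: indicator_def abs_mult fun_eq_iff)
      have eq2: "(\<lambda>x. ennreal ((\<bar>f1 x\<bar> * indicator E x) powr p)) = (\<lambda>x. ennreal (\<bar>f1 x\<bar> powr p) * indicator E x)"
        using p by (auto simp: indicator_def fun_eq_iff)
      have eq3: "(\<lambda>x. ennreal ((\<bar>f2 x\<bar> * indicator E x) powr q)) = (\<lambda>x. ennreal (\<bar>f2 x\<bar> powr q) * indicator E x)"
        using q by (auto simp: indicator_def fun_eq_iff)
      have H: "(\<integral>\<^sup>+ x\<in>E. ennreal (\<bar>f1 x * f2 x\<bar>) \<partial>lebesgue) \<le> epow A (1/p) * epow B (1/q)"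
        using holder_nn[OF p q pq, of "\<lambda>x. \<bar>f1 x\<bar> * indicator E x" lebesgue "\<lambda>x. \<bar>f2 x\<bar> * indicator E x"]
        unfolding eq1 eq2 eq3 A_def B_def by simp
      have A1: "ennreal (L powr \<alpha>1) * A \<le> S1"
        unfolding S1_def
        by (rule SUP_upper2[OF s]) (auto simp: L_def A_def intro!: mult_left_mono SUP_upper E)
      have B1: "ennreal (L powr \<alpha>2) * B \<le> S2"
        unfolding S2_def
        by (rule SUP_upper2[OF s]) (auto simp: L_def B_def intro!: mult_left_mono SUP_upper E)
      have Lp: "L powr (\<alpha>1 / p + \<alpha>2 / q) = (L powr \<alpha>1) powr (1/p) * (L powr \<alpha>2) powr (1/q)"
        using L1 by (simp add: powr_powr powr_add)
      have "ennreal (L powr (\<alpha>1 / p + \<alpha>2 / q)) * (\<integral>\<^sup>+ x\<in>E. ennreal (\<bar>f1 x * f2 x\<bar>) \<partial>lebesgue)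
          \<le> ennreal (L powr (\<alpha>1 / p + \<alpha>2 / q)) * (epow A (1/p) * epow B (1/q))"
        by (rule mult_left_mono[OF H]) simp
      also have "\<dots> = (ennreal ((L powr \<alpha>1) powr (1/p)) * epow A (1/p)) *
                      (ennreal ((L powr \<alpha>2) powr (1/q)) * epow B (1/q))"
        unfolding Lp by (simp add: ennreal_mult ac_simps)
      also have "\<dots> = epow (ennreal (L powr \<alpha>1) * A) (1/p) * epow (ennreal (L powr \<alpha>2) * B) (1/q)"
        using L1 p q by (simp add: epow_cmult)
      also have "\<dots> \<le> epow S1 (1/p) * epow S2 (1/q)"
        using p q by (intro mult_mono epow_mono A1 B1) auto
      finally show "ennreal (ln (exp 1 + 1 / s) powr (\<alpha>1 / p + \<alpha>2 / q)) *
           (\<integral>\<^sup>+ x\<in>E. ennreal (\<bar>f1 x * f2 x\<bar>) \<partial>lebesgue) \<le> epow S1 (1/p) * epow S2 (1/q)"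
        by (simp add: L_def)
    qed
  qed
  finally show ?thesis using N1 N2 by simp
qed


lemma core_inf:
  fixes f1 f2 :: "'a::euclidean_space \<Rightarrow> real"
  assumes m2[measurable]: "f2 \<in> borel_measurable lebesgue"
  shows "LlogL_norm 1 \<alpha>2 (\<lambda>x. f1 x * f2 x) \<le> LlogL_norm \<infinity> \<alpha>1 f1 * LlogL_norm 1 \<alpha>2 f2"
proof -
  define M where "M = esssup lebesgue (\<lambda>x. ennreal \<bar>f1 x\<bar>)"
  define S2 where "S2 = (SUP s\<in>{0<..}. ennreal (ln (exp 1 + 1 / s) powr \<alpha>2) *
          (SUP E\<in>{E \<in> sets lebesgue. emeasure lebesgue E = ennreal s}.
              (\<integral>\<^sup>+ x\<in>E. ennreal (\<bar>f2 x\<bar>) \<partial>lebesgue)))"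
  have N1: "LlogL_norm \<infinity> \<alpha>1 f1 = M" by (simp add: LlogL_norm_def M_def)
  have N2: "LlogL_norm 1 \<alpha>2 f2 = S2" by (simp add: LlogL_norm_def epow_one S2_def)
  have MAE: "AE x in lebesgue. ennreal \<bar>f1 x\<bar> \<le> M"
    unfolding M_def by (rule esssup_AE)
  have "LlogL_norm 1 \<alpha>2 (\<lambda>x. f1 x * f2 x) =
     (SUP s\<in>{0<..}. ennreal (ln (exp 1 + 1 / s) powr \<alpha>2) *
          (SUP E\<in>{E \<in> sets lebesgue. emeasure lebesgue E = ennreal s}.
              (\<integral>\<^sup>+ x\<in>E. ennreal (\<bar>f1 x * f2 x\<bar>) \<partial>lebesgue)))"
    by (simp add: LlogL_norm_def epow_one)
  also have "\<dots> \<le> M * S2"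
  proof (intro SUP_least)
    fix s :: real assume s: "s \<in> {0<..}"
    show "ennreal (ln (exp 1 + 1 / s) powr \<alpha>2) *
          (SUP E\<in>{E \<in> sets lebesgue. emeasure lebesgue E = ennreal s}.
              (\<integral>\<^sup>+ x\<in>E. ennreal (\<bar>f1 x * f2 x\<bar>) \<partial>lebesgue)) \<le> M * S2"
      unfolding SUP_mult_left_ennreal
    proof (intro SUP_least)
      fix E :: "'a set" assume E: "E \<in> {E \<in> sets lebesgue. emeasure lebesgue E = ennreal s}"
      then have Em[measurable]: "E \<in> sets lebesgue" by simp
      define I2 where "I2 = (\<integral>\<^sup>+ x\<in>E. ennreal (\<bar>f2 x\<bar>) \<partial>lebesgue)"
      have "(\<integral>\<^sup>+ x\<in>E. ennreal (\<bar>f1 x * f2 x\<bar>) \<partial>lebesgue)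
          \<le> (\<integral>\<^sup>+ x. M * (ennreal \<bar>f2 x\<bar> * indicator E x) \<partial>lebesgue)"
      proof (rule nn_integral_mono_AE)
        show "AE x in lebesgue. ennreal \<bar>f1 x * f2 x\<bar> * indicator E x \<le> M * (ennreal \<bar>f2 x\<bar> * indicator E x)"
          using MAE
        proof eventually_elim
          case (elim x)
          have "ennreal \<bar>f1 x * f2 x\<bar> = ennreal \<bar>f1 x\<bar> * ennreal \<bar>f2 x\<bar>"
            by (simp add: abs_mult ennreal_mult)
          also have "\<dots> \<le> M * ennreal \<bar>f2 x\<bar>"
            using elim by (rule mult_right_mono) simp
          finally show ?case by (auto simp: indicator_def)
        qed
      qed
      also have "\<dots> = M * I2"
        unfolding I2_def by (rule nn_integral_cmult) measurable
      finally have H: "(\<integral>\<^sup>+ x\<in>E. ennreal (\<bar>f1 x * f2 x\<bar>) \<partial>lebesgue) \<le> M * I2" .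
      have B1: "ennreal (ln (exp 1 + 1 / s) powr \<alpha>2) * I2 \<le> S2"
        unfolding S2_def
        by (rule SUP_upper2[OF s]) (auto simp: I2_def intro!: mult_left_mono SUP_upper E)
      have "ennreal (ln (exp 1 + 1 / s) powr \<alpha>2) * (\<integral>\<^sup>+ x\<in>E. ennreal (\<bar>f1 x * f2 x\<bar>) \<partial>lebesgue)
         \<le> ennreal (ln (exp 1 + 1 / s) powr \<alpha>2) * (M * I2)"
        by (rule mult_left_mono[OF H]) simp
      also have "\<dots> = M * (ennreal (ln (exp 1 + 1 / s) powr \<alpha>2) * I2)" by (simp add: ac_simps)
      also have "\<dots> \<le> M * S2" by (rule mult_left_mono[OF B1]) simp
      finally show "ennreal (ln (exp 1 + 1 / s) powr \<alpha>2) * (\<integral>\<^sup>+ x\<in>E. ennreal (\<bar>f1 x * f2 x\<bar>) \<partial>lebesgue) \<le> M * S2" .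
    qed
  qed
  finally show ?thesis using N1 N2 by simp
qed


lemma inv_exp_fin: "1 \<le> r \<Longrightarrow> inv_exp (ennreal r) = 1 / r"
  unfolding inv_exp_def using divide_ennreal[of 1 r] by simp

lemma inv_exp_top: "inv_exp top = 0"
  unfolding inv_exp_def by simp

lemma core:
  fixes f1 f2 :: "'a::euclidean_space \<Rightarrow> real"
  assumes "1 \<le> q1" and "1 \<le> q2" and "0 \<le> \<alpha>1" and "0 \<le> \<alpha>2"
    and "inv_exp q1 + inv_exp q2 = 1"
    and "\<alpha> = \<alpha>1 * inv_exp q1 + \<alpha>2 * inv_exp q2"
    and m1: "f1 \<in> borel_measurable lebesgue" and m2: "f2 \<in> borel_measurable lebesgue"
  shows "LlogL_norm 1 \<alpha> (\<lambda>x. f1 x * f2 x) \<le> LlogL_norm q1 \<alpha>1 f1 * LlogL_norm q2 \<alpha>2 f2"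
proof (cases "q1 = \<infinity>")
  case True
  then have i2: "inv_exp q2 = 1" using assms(5) by (simp add: inv_exp_top)
  have "q2 \<noteq> \<infinity>" using i2 inv_exp_top by auto
  then obtain r where r: "q2 = ennreal r" "0 \<le> r" by (cases q2) auto
  then have "1 \<le> r" using assms(2) by (simp add: ennreal_1[symmetric] del: ennreal_1)
  then have "r = 1" using i2 r by (simp add: inv_exp_fin)
  then have "q2 = 1" "\<alpha> = \<alpha>2" using r assms(6) i2 True by (auto simp: inv_exp_top)
  then show ?thesis using True by (simp add: core_inf[OF m2, unfolded infinity_ennreal_def])
next
  case F1: False
  show ?thesis
  proof (cases "q2 = \<infinity>")
    case True
    then have i1: "inv_exp q1 = 1" using assms(5) by (simp add: inv_exp_top)
    obtain r where r: "q1 = ennreal r" "0 \<le> r" using F1 by (cases q1) auto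
    then have "1 \<le> r" using assms(1) by (simp add: ennreal_1[symmetric] del: ennreal_1)
    then have "r = 1" using i1 r by (simp add: inv_exp_fin)
    then have q11: "q1 = 1" and "\<alpha> = \<alpha>1" using r assms(6) i1 True by (auto simp: inv_exp_top)
    have "LlogL_norm 1 \<alpha> (\<lambda>x. f1 x * f2 x) = LlogL_norm 1 \<alpha>1 (\<lambda>x. f2 x * f1 x)"
      using \<open>\<alpha> = \<alpha>1\<close> by (simp add: mult.commute)
    also have "\<dots> \<le> LlogL_norm top \<alpha>2 f2 * LlogL_norm 1 \<alpha>1 f1"
      by (rule core_inf[OF m1, unfolded infinity_ennreal_def])
    finally show ?thesis using True q11 by (simp add: mult.commute)
  next
    case F2: False
    obtain p where p: "q1 = ennreal p" "0 \<le> p" using F1 by (cases q1) auto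
    obtain q where q: "q2 = ennreal q" "0 \<le> q" using F2 by (cases q2) auto
    have p1: "1 \<le> p" using assms(1) p by (simp add: ennreal_1[symmetric] del: ennreal_1)
    have q1: "1 \<le> q" using assms(2) q by (simp add: ennreal_1[symmetric] del: ennreal_1)
    have pq: "1/p + 1/q = 1" using assms(5) p q p1 q1 by (simp add: inv_exp_fin)
    have "p \<noteq> 1" using pq q1 by auto
    then have pg: "p > 1" using p1 by simp
    have "q \<noteq> 1" using pq p1 by auto
    then have qg: "q > 1" using q1 by simp
    have al: "\<alpha> = \<alpha>1 / p + \<alpha>2 / q" using assms(6) p q p1 q1 by (simp add: inv_exp_fin)
    show ?thesis using core_fin[OF pg qg pq assms(3,4) m1 m2] al p q by simp
  qed
qed

theorem lemma2p2:
  fixes q1 q2 :: ennreal and \<alpha>1 \<alpha>2 \<alpha> :: real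
  assumes "1 \<le> q1" and "1 \<le> q2" and "0 \<le> \<alpha>1" and "0 \<le> \<alpha>2"
    and "inv_exp q1 + inv_exp q2 = 1"
    and "\<alpha> = \<alpha>1 * inv_exp q1 + \<alpha>2 * inv_exp q2"
  shows "(\<forall>(f1::'a::euclidean_space \<Rightarrow> real) f2. f1 \<in> LlogL_space q1 \<alpha>1 \<longrightarrow> f2 \<in> LlogL_space q2 \<alpha>2 \<longrightarrow>
            LlogL_norm 1 \<alpha> (\<lambda>x. f1 x * f2 x) \<le> LlogL_norm q1 \<alpha>1 f1 * LlogL_norm q2 \<alpha>2 f2)
       \<and> (\<forall>(g1::'a \<Rightarrow> real) g2 \<rho>. g1 \<in> ul_space q1 \<alpha>1 \<longrightarrow> g2 \<in> ul_space q2 \<alpha>2 \<longrightarrow> 0 < \<rho> \<longrightarrow>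
            ul_norm 1 \<alpha> \<rho> (\<lambda>x. g1 x * g2 x) \<le> ul_norm q1 \<alpha>1 \<rho> g1 * ul_norm q2 \<alpha>2 \<rho> g2)"
proof (intro conjI allI impI)
  fix f1 f2 :: "'a \<Rightarrow> real"
  assume "f1 \<in> LlogL_space q1 \<alpha>1" "f2 \<in> LlogL_space q2 \<alpha>2"
  then have "f1 \<in> borel_measurable lebesgue" "f2 \<in> borel_measurable lebesgue"
    by (auto simp: LlogL_space_def intro: loc_int_meas)
  then show "LlogL_norm 1 \<alpha> (\<lambda>x. f1 x * f2 x) \<le> LlogL_norm q1 \<alpha>1 f1 * LlogL_norm q2 \<alpha>2 f2"
    using core[OF assms] by blast
next
  fix g1 g2 :: "'a \<Rightarrow> real" and \<rho> :: real
  assume "g1 \<in> ul_space q1 \<alpha>1" "g2 \<in> ul_space q2 \<alpha>2"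
  then have m1[measurable]: "g1 \<in> borel_measurable lebesgue"
    and m2[measurable]: "g2 \<in> borel_measurable lebesgue"
    by (auto simp: ul_space_def intro: loc_int_meas)
  show "ul_norm 1 \<alpha> \<rho> (\<lambda>x. g1 x * g2 x) \<le> ul_norm q1 \<alpha>1 \<rho> g1 * ul_norm q2 \<alpha>2 \<rho> g2"
    unfolding ul_norm_def
  proof (rule SUP_least)
    fix z :: 'a
    have eq: "(\<lambda>x. indicator (ball z \<rho>) x * (g1 x * g2 x))
       = (\<lambda>x. (indicator (ball z \<rho>) x * g1 x) * (indicator (ball z \<rho>) x * g2 x))"
      by (auto simp: indicator_def fun_eq_iff)
    have "LlogL_norm 1 \<alpha> (\<lambda>x. indicator (ball z \<rho>) x * (g1 x * g2 x))
       \<le> LlogL_norm q1 \<alpha>1 (\<lambda>x. indicator (ball z \<rho>) x * g1 x) * LlogL_norm q2 \<alpha>2 (\<lambda>x. indicator (ball z \<rho>) x * g2 x)"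
    proof -
      have b: "ball z \<rho> \<in> sets lebesgue" by simp
      have "(\<lambda>x. indicator (ball z \<rho>) x * g1 x) \<in> borel_measurable lebesgue"
        "(\<lambda>x. indicator (ball z \<rho>) x * g2 x) \<in> borel_measurable lebesgue"
        using m1 m2 b by (auto intro!: borel_measurable_times borel_measurable_indicator)
      then show ?thesis unfolding eq by (rule core[OF assms])
    qed
    also have "\<dots> \<le> (SUP z. LlogL_norm q1 \<alpha>1 (\<lambda>x. indicator (ball z \<rho>) x * g1 x)) *
                    (SUP z. LlogL_norm q2 \<alpha>2 (\<lambda>x. indicator (ball z \<rho>) x * g2 x))"
      by (intro mult_mono SUP_upper) auto
    finally show "LlogL_norm 1 \<alpha> (\<lambda>x. indicator (ball z \<rho>) x * (g1 x * g2 x))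
       \<le> (SUP z. LlogL_norm q1 \<alpha>1 (\<lambda>x. indicator (ball z \<rho>) x * g1 x)) *
         (SUP z. LlogL_norm q2 \<alpha>2 (\<lambda>x. indicator (ball z \<rho>) x * g2 x))" .
  qed
qed

end
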